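(* Let $\mathbb{K}$ be a field, $m\ge 3$, $R=\mathbb{K}[T_1,\dots,T_m]$, $\mathbf{b}=(b_1,\dots,b_m)\in\mathbb{N}^m$ with $b_i\ne0$ for at least two $i$, $|\mathbf{b}|=\sum b_i$, and $I=\langle T_1^{|\mathbf{b}|},\dots,T_m^{|\mathbf{b}|},T_1^{b_1}\cdots T_m^{b_m}\rangle$ (the equi-generated case). Let $L\subset S=R[X_1,\dots,X_m,W]$ be the defining ideal of the Rees algebra of $I$ and $L_1$ its component of degree one in $X_1,\dots,X_m,W$. If $\ell\in\mathbb{Z}$ satisfies $\ell\ge\frac{(m-1)(|\mathbf{b}|-1)}{m}$, then $L_1S:(T_1T_2\cdots T_m)^{\ell}=L$. In particular, $L_1S:(T_1T_2\cdots T_m)^{|\mathbf{b}|}=L$.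
   Context: $L$ is the kernel of the $R$-algebra map $S\to R[Z]$ given by $X_i\mapsto T_i^{|\mathbf{b}|}Z$ and $W\mapsto T_1^{b_1}\cdots T_m^{b_m}Z$; it is graded by total degree in $X_1,\dots,X_m,W$. *)

theory Defs
  imports Complex_Main "HOL-Library.Poly_Mapping"
begin

text \<open>Variables: T i (coordinates of R), X i, W (Rees variables of S), Z (target variable of R[Z]).
Indices run over 1..m.\<close>
datatype var = T nat | X nat | W | Z

type_synonym 'k mpoly = "(var \<Rightarrow>\<^sub>0 nat) \<Rightarrow>\<^sub>0 'k"

definition Var :: "var \<Rightarrow> 'k::comm_ring_1 mpoly" where
  "Var v = Poly_Mapping.single (Poly_Mapping.single v 1) 1"

definition Const :: "'k::comm_ring_1 \<Rightarrow> 'k mpoly" where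
  "Const c = Poly_Mapping.single 0 c"

definition subst :: "(var \<Rightarrow> 'k::comm_ring_1 mpoly) \<Rightarrow> 'k mpoly \<Rightarrow> 'k mpoly" where
  "subst \<sigma> p = (\<Sum>mon\<in>Poly_Mapping.keys p. Const (Poly_Mapping.lookup p mon) *
                    (\<Prod>v\<in>Poly_Mapping.keys mon. (\<sigma> v) ^ (Poly_Mapping.lookup mon v)))"

definition S_vars :: "nat \<Rightarrow> var set" where
  "S_vars m = {T i | i. 1 \<le> i \<and> i \<le> m} \<union> {X i | i. 1 \<le> i \<and> i \<le> m} \<union> {W}"

definition in_S :: "nat \<Rightarrow> 'k::comm_ring_1 mpoly \<Rightarrow> bool" where
  "in_S m p \<longleftrightarrow> (\<forall>mon\<in>Poly_Mapping.keys p. Poly_Mapping.keys mon \<subseteq> S_vars m)"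

definition bsum :: "nat \<Rightarrow> (nat \<Rightarrow> nat) \<Rightarrow> nat" where
  "bsum m b = (\<Sum>i=1..m. b i)"

definition rees_map :: "nat \<Rightarrow> (nat \<Rightarrow> nat) \<Rightarrow> var \<Rightarrow> 'k::comm_ring_1 mpoly" where
  "rees_map m b v = (case v of
      T i \<Rightarrow> Var (T i)
    | X i \<Rightarrow> Var (T i) ^ bsum m b * Var Z
    | W \<Rightarrow> (\<Prod>i=1..m. Var (T i) ^ b i) * Var Z
    | Z \<Rightarrow> Var Z)"

definition rees_ideal :: "nat \<Rightarrow> (nat \<Rightarrow> nat) \<Rightarrow> 'k::comm_ring_1 mpoly set" where
  "rees_ideal m b = {p. in_S m p \<and> subst (rees_map m b) p = 0}"

definition is_XW :: "var \<Rightarrow> bool" where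
  "is_XW v \<longleftrightarrow> (case v of X _ \<Rightarrow> True | W \<Rightarrow> True | _ \<Rightarrow> False)"

definition xw_deg :: "(var \<Rightarrow>\<^sub>0 nat) \<Rightarrow> nat" where
  "xw_deg mon = (\<Sum>v\<in>{v\<in>Poly_Mapping.keys mon. is_XW v}. Poly_Mapping.lookup mon v)"

definition rees_ideal_1 :: "nat \<Rightarrow> (nat \<Rightarrow> nat) \<Rightarrow> 'k::comm_ring_1 mpoly set" where
  "rees_ideal_1 m b = {p \<in> rees_ideal m b. \<forall>mon\<in>Poly_Mapping.keys p. xw_deg mon = 1}"

definition S_ideal :: "nat \<Rightarrow> 'k::comm_ring_1 mpoly set \<Rightarrow> 'k mpoly set" where
  "S_ideal m G = {(\<Sum>i<n. s i * g i) | (n::nat) s g. \<forall>i<n. in_S m (s i) \<and> g i \<in> G}"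

definition S_colon :: "nat \<Rightarrow> 'k::comm_ring_1 mpoly set \<Rightarrow> 'k mpoly \<Rightarrow> 'k mpoly set" where
  "S_colon m J f = {h. in_S m h \<and> f * h \<in> J}"

definition T_prod :: "nat \<Rightarrow> 'k::comm_ring_1 mpoly" where
  "T_prod m = (\<Prod>i=1..m. Var (T i))"

end

theory Submission
  imports Defs
begin

lemma single_pow: "(Poly_Mapping.single a (1::'k::comm_semiring_1)) ^ k = Poly_Mapping.single (\<Sum>j<k. a) 1"
  by (induction k) (simp_all add: mult_single add.commute)

lemma prod_single: "(\<Prod>v\<in>K. Poly_Mapping.single (g v) (1::'k::comm_semiring_1)) = Poly_Mapping.single (\<Sum>v\<in>K. g v) 1"
proof (induction K rule: infinite_finite_induct)
  case (infinite A) then show ?case by simp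
next
  case empty then show ?case by simp
next
  case (insert x F) then show ?case by (simp add: mult_single)
qed

definition gimg :: "(var \<Rightarrow> (var \<Rightarrow>\<^sub>0 nat)) \<Rightarrow> (var \<Rightarrow>\<^sub>0 nat) \<Rightarrow> (var \<Rightarrow>\<^sub>0 nat)" where
  "gimg r u = (\<Sum>v\<in>Poly_Mapping.keys u. \<Sum>j<Poly_Mapping.lookup u v. r v)"

lemma lookup_gimg: "Poly_Mapping.lookup (gimg r u) w = (\<Sum>v\<in>Poly_Mapping.keys u. Poly_Mapping.lookup u v * Poly_Mapping.lookup (r v) w)"
  by (simp add: gimg_def lookup_sum)

lemma subst_monos:
  assumes "\<And>v. \<sigma> v = Poly_Mapping.single (r v) 1"
  shows "subst \<sigma> p = (\<Sum>mon\<in>Poly_Mapping.keys p. Poly_Mapping.single (gimg r mon) (Poly_Mapping.lookup p mon))"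
  unfolding subst_def
proof (rule sum.cong[OF refl])
  fix mon
  have "(\<Prod>v\<in>Poly_Mapping.keys mon. (\<sigma> v) ^ (Poly_Mapping.lookup mon v)) = Poly_Mapping.single (gimg r mon) 1"
    by (simp add: assms single_pow prod_single gimg_def)
  then show "Const (Poly_Mapping.lookup p mon) * (\<Prod>v\<in>Poly_Mapping.keys mon. \<sigma> v ^ Poly_Mapping.lookup mon v) =
         Poly_Mapping.single (gimg r mon) (Poly_Mapping.lookup p mon)"
    by (simp add: Const_def mult_single)
qed

lemma mpoly_expand: "p = (\<Sum>k\<in>Poly_Mapping.keys p. Poly_Mapping.single k (Poly_Mapping.lookup p k))"
proof (rule poly_mapping_eqI)
  fix x
  show "Poly_Mapping.lookup p x = Poly_Mapping.lookup (\<Sum>k\<in>Poly_Mapping.keys p. Poly_Mapping.single k (Poly_Mapping.lookup p k)) x"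
    by (cases "x \<in> Poly_Mapping.keys p") (simp_all add: lookup_sum lookup_single when_def in_keys_iff)
qed

definition lin :: "(var \<Rightarrow> (var \<Rightarrow>\<^sub>0 nat)) \<Rightarrow> ((var \<Rightarrow>\<^sub>0 nat) \<Rightarrow>\<^sub>0 'k::comm_ring_1) \<Rightarrow> ((var \<Rightarrow>\<^sub>0 nat) \<Rightarrow>\<^sub>0 'k)" where
  "lin r p = (\<Sum>mon\<in>Poly_Mapping.keys p. Poly_Mapping.single (gimg r mon) (Poly_Mapping.lookup p mon))"

lemma lin_superset:
  assumes "finite K" "Poly_Mapping.keys p \<subseteq> K"
  shows "lin r p = (\<Sum>mon\<in>K. Poly_Mapping.single (gimg r mon) (Poly_Mapping.lookup p mon))"
  unfolding lin_def
  by (rule sum.mono_neutral_left[OF assms]) (auto simp: in_keys_iff)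

lemma lin_add: "lin r (p + q) = lin r p + lin r q"
proof -
  let ?K = "Poly_Mapping.keys p \<union> Poly_Mapping.keys q"
  have "lin r (p + q) = (\<Sum>mon\<in>?K. Poly_Mapping.single (gimg r mon) (Poly_Mapping.lookup (p+q) mon))"
    by (rule lin_superset) (auto dest: set_mp[OF keys_add])
  also have "\<dots> = (\<Sum>mon\<in>?K. Poly_Mapping.single (gimg r mon) (Poly_Mapping.lookup p mon))
     + (\<Sum>mon\<in>?K. Poly_Mapping.single (gimg r mon) (Poly_Mapping.lookup q mon))"
    by (simp add: lookup_add single_add sum.distrib)
  also have "\<dots> = lin r p + lin r q"
    by (simp add: lin_superset[symmetric])
  finally show ?thesis .
qed

lemma lin_zero[simp]: "lin r 0 = 0"
  by (simp add: lin_def)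

lemma lin_uminus: "lin r (- p) = - lin r p"
  using lin_add[of r p "-p"] by (simp add: eq_neg_iff_add_eq_0 add.commute)

lemma lin_diff: "lin r (p - q) = lin r p - lin r q"
  using lin_add[of r p "-q"] by (simp add: lin_uminus)

lemma lin_sum: "lin r (sum f A) = (\<Sum>a\<in>A. lin r (f a))"
  by (induction A rule: infinite_finite_induct) (simp_all add: lin_add)

lemma lin_single: "lin r (Poly_Mapping.single a c) = Poly_Mapping.single (gimg r a) c"
  by (simp add: lin_def)

lemma gimg_add: "gimg r (a + b) = gimg r a + gimg r b"
proof (rule poly_mapping_eqI)
  fix w
  let ?K = "Poly_Mapping.keys a \<union> Poly_Mapping.keys b"
  have e: "\<And>c. Poly_Mapping.keys c \<subseteq> ?K \<Longrightarrow> Poly_Mapping.lookup (gimg r c) w = (\<Sum>v\<in>?K. Poly_Mapping.lookup c v * Poly_Mapping.lookup (r v) w)"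
    unfolding lookup_gimg by (rule sum.mono_neutral_left) (auto simp: in_keys_iff)
  show "Poly_Mapping.lookup (gimg r (a + b)) w = Poly_Mapping.lookup (gimg r a + gimg r b) w"
    apply (simp only: lookup_add)
    apply (subst (1 2 3) e)
    by (auto dest: set_mp[OF keys_add] simp: lookup_add sum.distrib algebra_simps)
qed

lemma lin_mult: "lin r (p * q) = lin r p * lin r q"
proof -
  have "p * q = (\<Sum>a\<in>Poly_Mapping.keys p. \<Sum>k\<in>Poly_Mapping.keys q.
      Poly_Mapping.single (a + k) (Poly_Mapping.lookup p a * Poly_Mapping.lookup q k))"
    apply (subst (1) mpoly_expand[of p], subst (1) mpoly_expand[of q])
    by (simp add: sum_product mult_single)
  then have "lin r (p * q) = (\<Sum>a\<in>Poly_Mapping.keys p. \<Sum>k\<in>Poly_Mapping.keys q.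
      Poly_Mapping.single (gimg r a) (Poly_Mapping.lookup p a) * Poly_Mapping.single (gimg r k) (Poly_Mapping.lookup q k))"
    by (simp add: lin_sum lin_single gimg_add mult_single)
  also have "\<dots> = lin r p * lin r q"
    by (simp add: lin_def sum_product)
  finally show ?thesis .
qed

definition rexp :: "nat \<Rightarrow> (nat \<Rightarrow> nat) \<Rightarrow> var \<Rightarrow> (var \<Rightarrow>\<^sub>0 nat)" where
  "rexp m b v = (case v of
      T i \<Rightarrow> Poly_Mapping.single (T i) 1
    | X i \<Rightarrow> (\<Sum>j<bsum m b. Poly_Mapping.single (T i) 1) + Poly_Mapping.single Z 1
    | W \<Rightarrow> (\<Sum>i=1..m. \<Sum>j<b i. Poly_Mapping.single (T i) 1) + Poly_Mapping.single Z 1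
    | Z \<Rightarrow> Poly_Mapping.single Z 1)"

lemma Var_single: "Var v = Poly_Mapping.single (Poly_Mapping.single v 1) 1"
  by (simp add: Var_def)

lemma rees_map_single: "(rees_map m b v :: 'k::comm_ring_1 mpoly) = Poly_Mapping.single (rexp m b v) 1"
  by (cases v) (simp_all add: rees_map_def rexp_def Var_single single_pow mult_single prod_single)

lemma subst_rees: "subst (rees_map m b) (p :: 'k::comm_ring_1 mpoly) = lin (rexp m b) p"
  unfolding lin_def by (rule subst_monos) (rule rees_map_single)

lemma lookup_rexp_T: "Poly_Mapping.lookup (rexp m b (T i)) w = (if w = T i then 1 else 0)"
  by (simp add: rexp_def lookup_single when_def)
lemma lookup_rexp_X: "Poly_Mapping.lookup (rexp m b (X i)) w = (if w = T i then bsum m b else 0) + (if w = Z then 1 else 0)"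
  by (simp add: rexp_def lookup_single when_def lookup_add lookup_sum)
lemma lookup_rexp_W: "Poly_Mapping.lookup (rexp m b W) w = (\<Sum>i=1..m. if w = T i then b i else 0) + (if w = Z then 1 else 0)"
  by (simp add: rexp_def lookup_single when_def lookup_add lookup_sum) (auto intro!: sum.cong)

lemma S_vars_eq: "S_vars m = T ` {1..m} \<union> X ` {1..m} \<union> {W}"
  by (auto simp: S_vars_def)

lemma sum_S_vars: "(\<Sum>v\<in>S_vars m. g v) = (\<Sum>i=1..m. g (T i)) + (\<Sum>i=1..m. g (X i)) + g W"
proof -
  have "(\<Sum>v\<in>S_vars m. g v) = (\<Sum>v\<in>T ` {1..m} \<union> X ` {1..m}. g v) + g W"
    unfolding S_vars_eq by (subst sum.union_disjoint) auto
  also have "(\<Sum>v\<in>T ` {1..m} \<union> X ` {1..m}. g v) = (\<Sum>v\<in>T ` {1..m}. g v) + (\<Sum>v\<in>X ` {1..m}. g v)"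
    by (subst sum.union_disjoint) auto
  also have "(\<Sum>v\<in>T ` {1..m}. g v) = (\<Sum>i=1..m. g (T i))"
    by (subst sum.reindex) (auto simp: inj_on_def)
  also have "(\<Sum>v\<in>X ` {1..m}. g v) = (\<Sum>i=1..m. g (X i))"
    by (subst sum.reindex) (auto simp: inj_on_def)
  finally show ?thesis .
qed

definition monS :: "nat \<Rightarrow> (var \<Rightarrow>\<^sub>0 nat) \<Rightarrow> bool" where
  "monS m u \<longleftrightarrow> Poly_Mapping.keys u \<subseteq> S_vars m"

abbreviation "lk u v \<equiv> Poly_Mapping.lookup u v"

lemma sum_keys_S:
  assumes "monS m u"
  shows "(\<Sum>v\<in>Poly_Mapping.keys u. lk u v * g v) = (\<Sum>i=1..m. lk u (T i) * g (T i)) + (\<Sum>i=1..m. lk u (X i) * g (X i)) + lk u W * g W"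
proof -
  have "(\<Sum>v\<in>Poly_Mapping.keys u. lk u v * g v) = (\<Sum>v\<in>S_vars m. lk u v * g v)"
    by (rule sum.mono_neutral_left) (use assms in \<open>auto simp: monS_def in_keys_iff S_vars_def\<close>)
  then show ?thesis by (simp add: sum_S_vars)
qed

lemma img_lookup:
  assumes "monS m u"
  shows "lk (gimg (rexp m b) u) w = (\<Sum>i=1..m. if w = T i then lk u (T i) else 0)
     + ((\<Sum>i=1..m. if w = T i then bsum m b * lk u (X i) else 0) + (\<Sum>i=1..m. if w = Z then lk u (X i) else 0))
     + ((\<Sum>i=1..m. if w = T i then lk u W * b i else 0) + (if w = Z then lk u W else 0))"
  unfolding lookup_gimg sum_keys_S[OF assms]
  by (auto simp: lookup_rexp_T lookup_rexp_X lookup_rexp_W sum_distrib_left distrib_left sum.distrib[symmetric] intro!: sum.cong arg_cong2[where f="(+)"])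

lemma img_T:
  assumes "monS m u" "i \<in> {1..m}"
  shows "lk (gimg (rexp m b) u) (T i) = lk u (T i) + bsum m b * lk u (X i) + lk u W * b i"
  unfolding img_lookup[OF assms(1)] using assms(2) by (simp add: if_distrib cong: if_cong)

lemma img_Z:
  assumes "monS m u"
  shows "lk (gimg (rexp m b) u) Z = (\<Sum>i=1..m. lk u (X i)) + lk u W"
  unfolding img_lookup[OF assms(1)] by simp

lemma img_other:
  assumes "monS m u" "\<And>i. w \<noteq> T i" "w \<noteq> Z"
  shows "lk (gimg (rexp m b) u) w = 0"
  unfolding img_lookup[OF assms(1)] using assms(2,3) by simp

lemma img_T_out:
  assumes "monS m u" "i \<notin> {1..m}"
  shows "lk (gimg (rexp m b) u) (T i) = 0"
  unfolding img_lookup[OF assms(1)] using assms(2) by (auto intro!: sum.neutral)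

lemma img_eqI:
  assumes "monS m u" "monS m v"
    and "\<And>i. i \<in> {1..m} \<Longrightarrow> lk u (T i) + bsum m b * lk u (X i) + lk u W * b i = lk v (T i) + bsum m b * lk v (X i) + lk v W * b i"
    and "(\<Sum>i=1..m. lk u (X i)) + lk u W = (\<Sum>i=1..m. lk v (X i)) + lk v W"
  shows "gimg (rexp m b) u = gimg (rexp m b) v"
proof (rule poly_mapping_eqI)
  fix w
  show "lk (gimg (rexp m b) u) w = lk (gimg (rexp m b) v) w"
  proof (cases w)
    case (T i)
    then show ?thesis
      by (cases "i \<in> {1..m}") (simp_all add: img_T img_T_out assms)
  next
    case Z then show ?thesis using assms(4) by (simp add: img_Z assms(1,2))
  qed (simp_all add: img_other assms)
qed

lemma in_S_iff: "in_S m p \<longleftrightarrow> (\<forall>mon. lk p mon \<noteq> 0 \<longrightarrow> monS m mon)"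
  by (auto simp: in_S_def monS_def in_keys_iff)

lemma in_S_mult: assumes "in_S m p" "in_S m q" shows "in_S m (p * q)"
  unfolding in_S_def
proof
  fix mon assume "mon \<in> Poly_Mapping.keys (p * q)"
  then obtain a c where "mon = a + c" "a \<in> Poly_Mapping.keys p" "c \<in> Poly_Mapping.keys q"
    using keys_mult by blast
  with assms show "Poly_Mapping.keys mon \<subseteq> S_vars m"
    unfolding in_S_def using keys_add[of a c] by blast
qed

lemma in_S_uminus: "in_S m p \<Longrightarrow> in_S m (- p)"
  by (simp add: in_S_iff)

lemma in_S_single: "monS m w \<Longrightarrow> in_S m (Poly_Mapping.single w c)"
  by (simp add: in_S_def monS_def)

lemma in_S_Const: "in_S m (Const c)"
  by (simp add: in_S_def Const_def)

lemma in_S_one: "in_S m 1"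
  by (simp add: in_S_def)

lemma sum_split_add: fixes f :: "nat \<Rightarrow> 'a::comm_monoid_add" shows "(\<Sum>i<n1+n2. f i) = (\<Sum>i<n1. f i) + (\<Sum>i<n2. f (n1 + i))"
  by (induction n2) (simp_all add: add.assoc)

lemma S_idealI:
  fixes s g :: "nat \<Rightarrow> 'k::comm_ring_1 mpoly"
  assumes "x = (\<Sum>i<(n::nat). s i * g i)" "\<forall>i<n. in_S m (s i) \<and> g i \<in> G"
  shows "x \<in> S_ideal m G"
  unfolding S_ideal_def using assms by blast

lemma S_ideal_add:
  fixes x y :: "'k::comm_ring_1 mpoly"
  assumes "x \<in> S_ideal m G" "y \<in> S_ideal m G" shows "x + y \<in> S_ideal m G"
proof -
  obtain n1 s1 g1 where x: "x = (\<Sum>i<(n1::nat). s1 i * g1 i)" "\<forall>i<n1. in_S m (s1 i) \<and> g1 i \<in> G"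
    using assms(1) unfolding S_ideal_def by force
  obtain n2 s2 g2 where y: "y = (\<Sum>i<(n2::nat). s2 i * g2 i)" "\<forall>i<n2. in_S m (s2 i) \<and> g2 i \<in> G"
    using assms(2) unfolding S_ideal_def by force
  define s where "s i = (if i < n1 then s1 i else s2 (i - n1))" for i
  define g where "g i = (if i < n1 then g1 i else g2 (i - n1))" for i
  have "x + y = (\<Sum>i<n1+n2. s i * g i)"
    unfolding sum_split_add x y s_def g_def by simp
  moreover have "\<forall>i<n1+n2. in_S m (s i) \<and> g i \<in> G"
    using x(2) y(2) unfolding s_def g_def by auto
  ultimately show ?thesis by (rule S_idealI)
qed

lemma S_ideal_mult:
  fixes x t :: "'k::comm_ring_1 mpoly"
  assumes "x \<in> S_ideal m G" "in_S m t" shows "t * x \<in> S_ideal m G"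
proof -
  obtain n1 s1 g1 where x: "x = (\<Sum>i<(n1::nat). s1 i * g1 i)" "\<forall>i<n1. in_S m (s1 i) \<and> g1 i \<in> G"
    using assms(1) unfolding S_ideal_def by force
  have "t * x = (\<Sum>i<n1. (t * s1 i) * g1 i)"
    unfolding x by (simp add: sum_distrib_left mult.assoc)
  moreover have "\<forall>i<n1. in_S m (t * s1 i) \<and> g1 i \<in> G"
    using x(2) assms(2) by (auto intro: in_S_mult)
  ultimately show ?thesis by (rule S_idealI)
qed

lemma S_ideal_gen:
  fixes g s :: "'k::comm_ring_1 mpoly"
  assumes "g \<in> G" "in_S m s" shows "s * g \<in> S_ideal m G"
proof -
  have "s * g = (\<Sum>i<(Suc 0::nat). (\<lambda>_. s) i * (\<lambda>_. g) i)" by simp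
  then show ?thesis by (rule S_idealI) (use assms in auto)
qed

lemma S_ideal_zero: "(0::'k::comm_ring_1 mpoly) \<in> S_ideal m G"
proof -
  have "(0::'k::comm_ring_1 mpoly) = (\<Sum>i<(0::nat). (\<lambda>_. 0) i * (\<lambda>_. 0) i)" by simp
  then show ?thesis by (rule S_idealI) auto
qed

lemma S_ideal_uminus:
  fixes x :: "'k::comm_ring_1 mpoly"
  assumes "x \<in> S_ideal m G" shows "- x \<in> S_ideal m G"
  using S_ideal_mult[OF assms in_S_uminus[OF in_S_one]] by simp

lemma xw_deg_S:
  assumes "monS m u"
  shows "xw_deg u = (\<Sum>i=1..m. lk u (X i)) + lk u W"
proof -
  have "xw_deg u = (\<Sum>v\<in>Poly_Mapping.keys u. lk u v * (if is_XW v then 1 else 0))"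
    unfolding xw_deg_def by (simp add: sum.inter_filter[symmetric] if_distrib cong: if_cong)
  also have "\<dots> = (\<Sum>i=1..m. lk u (X i)) + lk u W"
    unfolding sum_keys_S[OF assms] by (simp add: is_XW_def)
  finally show ?thesis .
qed

lemma move_lemma:
  fixes b :: "nat \<Rightarrow> nat"
  assumes "monS m w" "monS m p" "monS m q" "xw_deg p = 1" "xw_deg q = 1"
    and "gimg (rexp m b) p = gimg (rexp m b) q"
  shows "Poly_Mapping.single (w + p) (1::'k::comm_ring_1) - Poly_Mapping.single (w + q) 1 \<in> S_ideal m (rees_ideal_1 m b)"
proof -
  let ?g = "Poly_Mapping.single p (1::'k) - Poly_Mapping.single q 1"
  have keys: "Poly_Mapping.keys ?g \<subseteq> {p, q}"
    by (auto simp: in_keys_iff lookup_minus lookup_single when_def split: if_splits)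
  have "?g \<in> rees_ideal_1 m b"
    unfolding rees_ideal_1_def rees_ideal_def
  proof (intro CollectI conjI ballI)
    show "in_S m ?g" using keys assms(2,3) unfolding in_S_def monS_def by blast
    show "subst (rees_map m b) ?g = 0"
      by (simp add: subst_rees lin_diff lin_single assms(6))
    fix mon assume "mon \<in> Poly_Mapping.keys ?g"
    then show "xw_deg mon = 1" using keys assms(4,5) by blast
  qed
  then have "Poly_Mapping.single w 1 * ?g \<in> S_ideal m (rees_ideal_1 m b)"
    by (rule S_ideal_gen) (rule in_S_single[OF assms(1)])
  then show ?thesis by (simp add: right_diff_distrib mult_single)
qed

definition st :: "nat \<Rightarrow> (nat \<Rightarrow> nat) \<Rightarrow> (nat \<Rightarrow> nat) \<Rightarrow> nat \<Rightarrow> (var \<Rightarrow>\<^sub>0 nat)" where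
  "st m \<alpha> \<beta> \<gamma> = (\<Sum>i=1..m. Poly_Mapping.single (T i) (\<alpha> i) + Poly_Mapping.single (X i) (\<beta> i)) + Poly_Mapping.single W \<gamma>"

lemma lk_st_T: "lk (st m \<alpha> \<beta> \<gamma>) (T j) = (if j \<in> {1..m} then \<alpha> j else 0)"
  by (auto simp: st_def lookup_add lookup_sum lookup_single when_def)
lemma lk_st_X: "lk (st m \<alpha> \<beta> \<gamma>) (X j) = (if j \<in> {1..m} then \<beta> j else 0)"
  by (auto simp: st_def lookup_add lookup_sum lookup_single when_def)
lemma lk_st_W: "lk (st m \<alpha> \<beta> \<gamma>) W = \<gamma>"
  by (auto simp: st_def lookup_add lookup_sum lookup_single when_def)
lemma lk_st_Z: "lk (st m \<alpha> \<beta> \<gamma>) Z = 0"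
  by (auto simp: st_def lookup_add lookup_sum lookup_single when_def)

lemma monS_st: "monS m (st m \<alpha> \<beta> \<gamma>)"
  unfolding monS_def
proof
  fix v assume "v \<in> Poly_Mapping.keys (st m \<alpha> \<beta> \<gamma>)"
  then have "lk (st m \<alpha> \<beta> \<gamma>) v \<noteq> 0" by (simp add: in_keys_iff)
  then show "v \<in> S_vars m"
    by (cases v) (auto simp: lk_st_T lk_st_X lk_st_W lk_st_Z S_vars_def split: if_splits)
qed

lemma st_eqI:
  assumes "\<And>i. i \<in> {1..m} \<Longrightarrow> \<alpha> i = \<alpha>' i" "\<And>i. i \<in> {1..m} \<Longrightarrow> \<beta> i = \<beta>' i" "\<gamma> = \<gamma>'"
  shows "st m \<alpha> \<beta> \<gamma> = st m \<alpha>' \<beta>' \<gamma>'"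
  unfolding st_def using assms by (auto intro!: sum.cong)

lemma st_add: "st m \<alpha> \<beta> \<gamma> + st m \<alpha>' \<beta>' \<gamma>' = st m (\<lambda>i. \<alpha> i + \<alpha>' i) (\<lambda>i. \<beta> i + \<beta>' i) (\<gamma> + \<gamma>')"
  unfolding st_def by (simp add: single_add sum.distrib algebra_simps)

lemma st_of:
  assumes "monS m u"
  shows "u = st m (\<lambda>i. lk u (T i)) (\<lambda>i. lk u (X i)) (lk u W)"
proof (rule poly_mapping_eqI)
  fix v
  have "v \<notin> S_vars m \<Longrightarrow> lk u v = 0" using assms by (auto simp: monS_def in_keys_iff)
  then show "lk u v = lk (st m (\<lambda>i. lk u (T i)) (\<lambda>i. lk u (X i)) (lk u W)) v"
    by (cases v) (auto simp: lk_st_T lk_st_X lk_st_W lk_st_Z S_vars_def)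
qed

lemma img_st_T: "i \<in> {1..m} \<Longrightarrow> lk (gimg (rexp m b) (st m \<alpha> \<beta> \<gamma>)) (T i) = \<alpha> i + bsum m b * \<beta> i + \<gamma> * b i"
  by (simp add: img_T monS_st lk_st_T lk_st_X lk_st_W)

lemma img_st_Z: "lk (gimg (rexp m b) (st m \<alpha> \<beta> \<gamma>)) Z = (\<Sum>i=1..m. \<beta> i) + \<gamma>"
  by (simp add: img_Z monS_st lk_st_X lk_st_W)

lemma img_st_eqI:
  assumes "\<And>i. i \<in> {1..m} \<Longrightarrow> \<alpha> i + bsum m b * \<beta> i + \<gamma> * b i = \<alpha>' i + bsum m b * \<beta>' i + \<gamma>' * b i"
    and "(\<Sum>i=1..m. \<beta> i) + \<gamma> = (\<Sum>i=1..m. \<beta>' i) + \<gamma>'"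
  shows "gimg (rexp m b) (st m \<alpha> \<beta> \<gamma>) = gimg (rexp m b) (st m \<alpha>' \<beta>' \<gamma>')"
  by (rule img_eqI[OF monS_st monS_st]) (use assms in \<open>simp_all add: lk_st_T lk_st_X lk_st_W\<close>)

lemma xw_deg_st: "xw_deg (st m \<alpha> \<beta> \<gamma>) = (\<Sum>i=1..m. \<beta> i) + \<gamma>"
proof -
  have "(\<Sum>i=1..m. lk (st m \<alpha> \<beta> \<gamma>) (X i)) = (\<Sum>i=1..m. \<beta> i)"
    by (rule sum.cong) (auto simp: lk_st_X)
  then show ?thesis using xw_deg_S[OF monS_st, of m \<alpha> \<beta> \<gamma>] by (simp add: lk_st_W)
qed

definition Rel :: "'k::comm_ring_1 itself \<Rightarrow> nat \<Rightarrow> (nat \<Rightarrow> nat) \<Rightarrow> (var \<Rightarrow>\<^sub>0 nat) \<Rightarrow> (var \<Rightarrow>\<^sub>0 nat) \<Rightarrow> bool" where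
  "Rel K m b u v \<longleftrightarrow> (Poly_Mapping.single u (1::'k) - Poly_Mapping.single v 1 \<in> S_ideal m (rees_ideal_1 m b))"

lemma Rel_refl: "Rel K m b u u"
  by (simp add: Rel_def S_ideal_zero)

lemma Rel_sym: "Rel K m b u v \<Longrightarrow> Rel K m b v u"
  unfolding Rel_def by (drule S_ideal_uminus) simp

lemma Rel_trans: "Rel K m b u v \<Longrightarrow> Rel K m b v w \<Longrightarrow> Rel K m b u w"
  unfolding Rel_def by (drule (1) S_ideal_add) simp

lemma Rel_move:
  assumes "monS m w" "monS m p" "monS m q" "xw_deg p = 1" "xw_deg q = 1"
    and "gimg (rexp m b) p = gimg (rexp m b) q"
  shows "Rel K m b (w + p) (w + q)"
  unfolding Rel_def by (rule move_lemma[OF assms])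

lemma sum_delta_1: "(i::nat) \<in> {1..m} \<Longrightarrow> (\<Sum>k=1..m. ((\<lambda>_. 0::nat)(i := c)) k) = c"
  unfolding fun_upd_def by (subst sum.delta) auto

lemma move_XX:
  assumes ij: "i \<in> {1..m}" "j \<in> {1..m}" "i \<noteq> j" and bi: "\<beta> i \<ge> 1" and aj: "\<alpha> j \<ge> bsum m b"
  shows "Rel K m b (st m \<alpha> \<beta> \<gamma>)
     (st m (\<alpha>(i := \<alpha> i + bsum m b, j := \<alpha> j - bsum m b)) (\<beta>(i := \<beta> i - 1, j := \<beta> j + 1)) \<gamma>)"
proof -
  let ?n = "bsum m b"
  define w where "w = st m (\<alpha>(j := \<alpha> j - ?n)) (\<beta>(i := \<beta> i - 1)) \<gamma>"
  define p where "p = st m ((\<lambda>_. 0)(j := ?n)) ((\<lambda>_. 0)(i := 1)) 0"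
  define q where "q = st m ((\<lambda>_. 0)(i := ?n)) ((\<lambda>_. 0)(j := 1)) 0"
  have "Rel K m b (w + p) (w + q)"
  proof (rule Rel_move)
    show "monS m w" "monS m p" "monS m q" unfolding w_def p_def q_def by (rule monS_st)+
    show "xw_deg p = 1" "xw_deg q = 1" unfolding p_def q_def xw_deg_st using ij by (simp_all add: sum_delta_1)
    show "gimg (rexp m b) p = gimg (rexp m b) q" unfolding p_def q_def
      by (rule img_st_eqI) (use ij in \<open>auto simp: sum_delta_1\<close>)
  qed
  moreover have "w + p = st m \<alpha> \<beta> \<gamma>" unfolding w_def p_def st_add
    by (rule st_eqI) (use ij bi aj in auto)
  moreover have "w + q = st m (\<alpha>(i := \<alpha> i + bsum m b, j := \<alpha> j - bsum m b)) (\<beta>(i := \<beta> i - 1, j := \<beta> j + 1)) \<gamma>"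
    unfolding w_def q_def st_add
    by (rule st_eqI) (use ij bi aj in auto)
  ultimately show ?thesis by simp
qed

lemma b_le_bsum: "i \<in> {1..m} \<Longrightarrow> b i \<le> bsum m b"
  unfolding bsum_def by (rule member_le_sum) auto

lemma move_XW:
  assumes i: "i \<in> {1..m}" and bi: "\<beta> i \<ge> 1" and ak: "\<And>k. k \<in> {1..m} \<Longrightarrow> k \<noteq> i \<Longrightarrow> \<alpha> k \<ge> b k"
  shows "Rel K m b (st m \<alpha> \<beta> \<gamma>)
     (st m (\<lambda>k. if k = i then \<alpha> i + (bsum m b - b i) else \<alpha> k - b k) (\<beta>(i := \<beta> i - 1)) (\<gamma> + 1))"
proof -
  let ?n = "bsum m b"
  define w where "w = st m (\<lambda>k. if k = i then \<alpha> i else \<alpha> k - b k) (\<beta>(i := \<beta> i - 1)) \<gamma>"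
  define p where "p = st m (\<lambda>k. if k = i then 0 else b k) ((\<lambda>_. 0)(i := 1)) 0"
  define q where "q = st m ((\<lambda>_. 0)(i := ?n - b i)) (\<lambda>_. 0) 1"
  have bn: "b i \<le> ?n" using b_le_bsum[OF i] .
  have "Rel K m b (w + p) (w + q)"
  proof (rule Rel_move)
    show "monS m w" "monS m p" "monS m q" unfolding w_def p_def q_def by (rule monS_st)+
    show "xw_deg p = 1" "xw_deg q = 1" unfolding p_def q_def xw_deg_st using i by (simp_all add: sum_delta_1)
    show "gimg (rexp m b) p = gimg (rexp m b) q" unfolding p_def q_def
      by (rule img_st_eqI) (use i bn in \<open>auto simp: sum_delta_1\<close>)
  qed
  moreover have "w + p = st m \<alpha> \<beta> \<gamma>" unfolding w_def p_def st_add
    by (rule st_eqI) (use i bi ak in auto)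
  moreover have "w + q = st m (\<lambda>k. if k = i then \<alpha> i + (bsum m b - b i) else \<alpha> k - b k) (\<beta>(i := \<beta> i - 1)) (\<gamma> + 1)"
    unfolding w_def q_def st_add
    by (rule st_eqI) (use i bi in auto)
  ultimately show ?thesis by simp
qed

definition fib :: "nat \<Rightarrow> (nat \<Rightarrow> nat) \<Rightarrow> (nat \<Rightarrow> nat) \<Rightarrow> (nat \<Rightarrow> nat) \<Rightarrow> nat \<Rightarrow> (nat \<Rightarrow> nat) \<Rightarrow> (nat \<Rightarrow> nat) \<Rightarrow> nat \<Rightarrow> bool" where
  "fib m b \<alpha> \<beta> \<gamma> \<alpha>' \<beta>' \<gamma>' \<longleftrightarrow>
     (\<forall>i\<in>{1..m}. \<alpha> i + bsum m b * \<beta> i + \<gamma> * b i = \<alpha>' i + bsum m b * \<beta>' i + \<gamma>' * b i)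
     \<and> (\<Sum>i=1..m. \<beta> i) + \<gamma> = (\<Sum>i=1..m. \<beta>' i) + \<gamma>'"

lemma sum_upd_nat:
  fixes f :: "nat \<Rightarrow> nat"
  assumes "finite A" "i \<in> A"
  shows "sum (f(i := x)) A + f i = sum f A + x"
proof -
  have "sum (f(i := x)) A = x + sum (f(i := x)) (A - {i})"
    using assms by (simp add: sum.remove)
  also have "sum (f(i := x)) (A - {i}) = sum f (A - {i})"
    by (rule sum.cong) auto
  finally show ?thesis using assms by (simp add: sum.remove)
qed

lemma sameLevel:
  fixes K :: "'k::comm_ring_1 itself"
  shows "fib m b \<alpha> \<beta> \<gamma> \<alpha>' \<beta>' \<gamma> \<Longrightarrow> Rel K m b (st m \<alpha> \<beta> \<gamma>) (st m \<alpha>' \<beta>' \<gamma>)"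
proof (induction "\<Sum>k=1..m. (\<beta> k - \<beta>' k) + (\<beta>' k - \<beta> k)" arbitrary: \<alpha> \<beta> rule: less_induct)
  case less
  let ?n = "bsum m b"
  have fT: "\<And>k. k \<in> {1..m} \<Longrightarrow> \<alpha> k + ?n * \<beta> k = \<alpha>' k + ?n * \<beta>' k"
    using less.prems unfolding fib_def by auto
  have fS: "(\<Sum>k=1..m. \<beta> k) = (\<Sum>k=1..m. \<beta>' k)"
    using less.prems unfolding fib_def by auto
  show ?case
  proof (cases "\<forall>k\<in>{1..m}. \<beta> k = \<beta>' k")
    case True
    then have "st m \<alpha> \<beta> \<gamma> = st m \<alpha>' \<beta>' \<gamma>"
      using fT by (intro st_eqI) auto
    then show ?thesis by (simp add: Rel_refl)
  next
    case False
    have "\<exists>i\<in>{1..m}. \<beta> i > \<beta>' i"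
    proof (rule ccontr)
      assume "\<not> ?thesis"
      then have le: "\<forall>k\<in>{1..m}. \<beta> k \<le> \<beta>' k" by auto
      with False have "\<exists>k\<in>{1..m}. \<beta> k < \<beta>' k" by force
      then have "(\<Sum>k=1..m. \<beta> k) < (\<Sum>k=1..m. \<beta>' k)"
        using le by (intro sum_strict_mono_ex1) auto
      with fS show False by simp
    qed
    then obtain i where i: "i \<in> {1..m}" "\<beta> i > \<beta>' i" by blast
    have "\<exists>j\<in>{1..m}. \<beta> j < \<beta>' j"
    proof (rule ccontr)
      assume "\<not> ?thesis"
      then have le: "\<forall>k\<in>{1..m}. \<beta>' k \<le> \<beta> k" by auto
      have "(\<Sum>k=1..m. \<beta>' k) < (\<Sum>k=1..m. \<beta> k)"
        using le i by (intro sum_strict_mono_ex1) auto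
      with fS show False by simp
    qed
    then obtain j where j: "j \<in> {1..m}" "\<beta> j < \<beta>' j" by blast
    have ij: "i \<noteq> j" using i j by auto
    have "?n * \<beta> j + ?n \<le> ?n * \<beta>' j"
      using j(2) by (metis Suc_le_eq mult_Suc_right mult_le_mono2 add.commute)
    then have aj: "\<alpha> j \<ge> ?n" using fT[OF j(1)] by linarith
    define \<alpha>1 where "\<alpha>1 = \<alpha>(i := \<alpha> i + ?n, j := \<alpha> j - ?n)"
    define \<beta>1 where "\<beta>1 = \<beta>(i := \<beta> i - 1, j := \<beta> j + 1)"
    have R1: "Rel K m b (st m \<alpha> \<beta> \<gamma>) (st m \<alpha>1 \<beta>1 \<gamma>)"
      unfolding \<alpha>1_def \<beta>1_def by (rule move_XX[where \<alpha>=\<alpha> and \<beta>=\<beta>, OF i(1) j(1) ij]) (use i aj in auto)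
    have s1: "(\<Sum>k=1..m. \<beta>1 k) = (\<Sum>k=1..m. \<beta> k)"
    proof -
      have "(\<Sum>k=1..m. (\<beta>(i := \<beta> i - 1)) k) + \<beta> i = (\<Sum>k=1..m. \<beta> k) + (\<beta> i - 1)"
        using i by (intro sum_upd_nat) auto
      moreover have "(\<Sum>k=1..m. \<beta>1 k) + (\<beta>(i := \<beta> i - 1)) j = (\<Sum>k=1..m. (\<beta>(i := \<beta> i - 1)) k) + (\<beta> j + 1)"
        unfolding \<beta>1_def using j ij by (intro sum_upd_nat) auto
      ultimately show ?thesis using i ij by simp
    qed
    have fib1: "fib m b \<alpha>1 \<beta>1 \<gamma> \<alpha>' \<beta>' \<gamma>"
      unfolding fib_def
    proof (intro conjI ballI)
      fix k assume k: "k \<in> {1..m}"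
      show "\<alpha>1 k + ?n * \<beta>1 k + \<gamma> * b k = \<alpha>' k + ?n * \<beta>' k + \<gamma> * b k"
      proof -
        have "\<alpha>1 k + ?n * \<beta>1 k = \<alpha> k + ?n * \<beta> k"
        proof (cases "k = i")
          case True
          then show ?thesis using i ij unfolding \<alpha>1_def \<beta>1_def
            by (simp add: right_diff_distrib' algebra_simps)
        next
          case False
          then show ?thesis using aj unfolding \<alpha>1_def \<beta>1_def by (cases "k = j") (simp_all add: algebra_simps)
        qed
        then show ?thesis using fT[OF k] by simp
      qed
    next
      show "(\<Sum>k=1..m. \<beta>1 k) + \<gamma> = (\<Sum>k=1..m. \<beta>' k) + \<gamma>" using s1 fS by simp
    qed
    let ?d = "\<lambda>\<beta>. \<Sum>k=1..m. (\<beta> k - \<beta>' k) + (\<beta>' k - \<beta> k)"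
    have "?d \<beta>1 < ?d \<beta>"
    proof (rule sum_strict_mono_ex1)
      show "\<forall>k\<in>{1..m}. (\<beta>1 k - \<beta>' k) + (\<beta>' k - \<beta>1 k) \<le> (\<beta> k - \<beta>' k) + (\<beta>' k - \<beta> k)"
        unfolding \<beta>1_def using i j ij by auto
      show "\<exists>k\<in>{1..m}. (\<beta>1 k - \<beta>' k) + (\<beta>' k - \<beta>1 k) < (\<beta> k - \<beta>' k) + (\<beta>' k - \<beta> k)"
        unfolding \<beta>1_def using i j ij by (intro bexI[of _ i]) auto
    qed simp
    then have "Rel K m b (st m \<alpha>1 \<beta>1 \<gamma>) (st m \<alpha>' \<beta>' \<gamma>)"
      using less.hyps fib1 by blast
    then show ?thesis using R1 Rel_trans by blast
  qed
qed

lemma exists_between_sum: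
  fixes f g :: "nat \<Rightarrow> int"
  assumes "finite I" "\<forall>k\<in>I. f k \<le> g k" "sum f I \<le> s" "s \<le> sum g I"
  shows "\<exists>h. (\<forall>k\<in>I. f k \<le> h k \<and> h k \<le> g k) \<and> sum h I = s"
  using assms
proof (induction I arbitrary: s rule: finite_induct)
  case empty
  then show ?case by auto
next
  case (insert x F)
  define hx where "hx = max (f x) (s - sum g F)"
  have "sum f F \<le> sum g F" using insert.prems by (intro sum_mono) auto
  then have "sum f F \<le> s - hx" "s - hx \<le> sum g F"
    using insert.prems insert.hyps unfolding hx_def by auto
  then obtain h where h: "\<forall>k\<in>F. f k \<le> h k \<and> h k \<le> g k" "sum h F = s - hx"
    using insert.IH[of "s - hx"] insert.prems by blast
  have "hx \<le> g x" using insert.prems insert.hyps unfolding hx_def by auto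
  moreover have "sum (h(x := hx)) F = sum h F"
    using insert.hyps by (intro sum.cong) auto
  ultimately show ?case using h insert.hyps
    by (intro exI[of _ "h(x := hx)"]) (auto simp: hx_def)
qed

lemma fib_sym: "fib m b \<alpha> \<beta> \<gamma> \<alpha>' \<beta>' \<gamma>' \<Longrightarrow> fib m b \<alpha>' \<beta>' \<gamma>' \<alpha> \<beta> \<gamma>"
  unfolding fib_def by auto

lemma fib_trans: "fib m b \<alpha> \<beta> \<gamma> \<alpha>' \<beta>' \<gamma>' \<Longrightarrow> fib m b \<alpha>' \<beta>' \<gamma>' \<alpha>'' \<beta>'' \<gamma>'' \<Longrightarrow> fib m b \<alpha> \<beta> \<gamma> \<alpha>'' \<beta>'' \<gamma>''"
  unfolding fib_def by auto

lemma fib_sum_alpha: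
  assumes "fib m b \<alpha> \<beta> \<gamma> \<alpha>' \<beta>' \<gamma>'"
  shows "(\<Sum>i=1..m. \<alpha> i) = (\<Sum>i=1..m. \<alpha>' i)"
proof -
  let ?n = "bsum m b"
  have e: "\<And>\<alpha> \<beta> \<gamma>. (\<Sum>i=1..m. \<alpha> i + ?n * \<beta> i + \<gamma> * b i) = (\<Sum>i=1..m. \<alpha> i) + ?n * ((\<Sum>i=1..m. \<beta> i) + \<gamma>)"
    by (simp only: sum.distrib sum_distrib_left[symmetric] bsum_def) (simp add: algebra_simps)
  have "(\<Sum>i=1..m. \<alpha> i + ?n * \<beta> i + \<gamma> * b i) = (\<Sum>i=1..m. \<alpha>' i + ?n * \<beta>' i + \<gamma>' * b i)"
    using assms unfolding fib_def by (intro sum.cong) auto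
  then have "(\<Sum>i=1..m. \<alpha> i) + ?n * ((\<Sum>i=1..m. \<beta> i) + \<gamma>) = (\<Sum>i=1..m. \<alpha>' i) + ?n * ((\<Sum>i=1..m. \<beta>' i) + \<gamma>')"
    by (simp only: e)
  moreover have "(\<Sum>i=1..m. \<beta> i) + \<gamma> = (\<Sum>i=1..m. \<beta>' i) + \<gamma>'" using assms unfolding fib_def by auto
  ultimately show ?thesis by simp
qed

lemma levelUp:
  fixes K :: "'k::comm_ring_1 itself"
  assumes fb: "fib m b \<alpha> \<beta> \<gamma> \<alpha>' \<beta>' \<gamma>'" and lt: "\<gamma> < \<gamma>'" and npos: "bsum m b > 0" and m1: "m \<ge> 1"
    and big: "(m - 1) * (bsum m b - 1) \<le> (\<Sum>i=1..m. \<alpha> i)"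
  shows "\<exists>\<alpha>2 \<beta>2. fib m b \<alpha> \<beta> \<gamma> \<alpha>2 \<beta>2 (\<gamma> + 1) \<and> Rel K m b (st m \<alpha> \<beta> \<gamma>) (st m \<alpha>2 \<beta>2 (\<gamma> + 1))"
proof -
  let ?n = "bsum m b"
  define N where "N = int ?n"
  have Npos: "N > 0" using npos unfolding N_def by simp
  have fT: "\<And>k. k \<in> {1..m} \<Longrightarrow> \<alpha> k + ?n * \<beta> k + \<gamma> * b k = \<alpha>' k + ?n * \<beta>' k + \<gamma>' * b k"
    using fb unfolding fib_def by auto
  have fS: "(\<Sum>k=1..m. \<beta> k) + \<gamma> = (\<Sum>k=1..m. \<beta>' k) + \<gamma>'"
    using fb unfolding fib_def by auto
  define x where "x k = int (\<alpha> k) - int (b k)" for k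
  define r where "r k = - (x k div N)" for k
  have ab: "\<alpha> k + ?n * \<beta> k \<ge> b k" if k: "k \<in> {1..m}" for k
  proof -
    have "\<gamma>' * b k \<ge> (\<gamma> + 1) * b k" using lt by (intro mult_le_mono1) auto
    then show ?thesis using fT[OF k] by (simp add: algebra_simps)
  qed
  have r_le: "r k \<le> int (\<beta> k)" if k: "k \<in> {1..m}" for k
  proof -
    have "int (b k) \<le> int (\<alpha> k + ?n * \<beta> k)" using ab[OF k] by (simp only: of_nat_le_iff)
    then have "- (N * int (\<beta> k)) \<le> x k" unfolding x_def N_def by (simp add: algebra_simps)
    then have "(- (N * int (\<beta> k))) div N \<le> x k div N" by (rule zdiv_mono1) (use Npos in simp)
    moreover have "(- (N * int (\<beta> k))) div N = - int (\<beta> k)"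
      using Npos by (metis minus_mult_right nonzero_mult_div_cancel_left less_irrefl)
    ultimately show ?thesis unfolding r_def by simp
  qed
  have sum_r: "(\<Sum>k=1..m. r k) \<le> 1"
  proof -
    have dm: "x k = N * (x k div N) + x k mod N" for k by simp
    have mb: "x k mod N \<le> N - 1" for k using Npos pos_mod_bound[of N "x k"] by linarith
    have sx: "(\<Sum>k=1..m. x k) = int (\<Sum>k=1..m. \<alpha> k) - N"
      unfolding x_def N_def bsum_def by (simp add: sum_subtractf of_nat_sum)
    have "(\<Sum>k=1..m. x k) = (\<Sum>k=1..m. N * (x k div N) + x k mod N)"
      by (intro sum.cong) simp_all
    also have "\<dots> = N * (\<Sum>k=1..m. x k div N) + (\<Sum>k=1..m. x k mod N)"
      by (simp only: sum.distrib sum_distrib_left)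
    finally have "(\<Sum>k=1..m. x k) = N * (\<Sum>k=1..m. x k div N) + (\<Sum>k=1..m. x k mod N)" .
    moreover have "(\<Sum>k=1..m. x k mod N) \<le> int m * (N - 1)"
      using sum_bounded_above[of "{1..m}" "\<lambda>k. x k mod N" "N - 1"] mb by simp
    moreover have "int (\<Sum>k=1..m. \<alpha> k) \<ge> (int m - 1) * (N - 1)"
    proof -
      have "int ((m - 1) * (?n - 1)) = (int m - 1) * (N - 1)" using m1 npos unfolding N_def by (simp add: of_nat_diff)
      then show ?thesis using big by (metis of_nat_le_iff)
    qed
    moreover have "(int m - 1) * (N - 1) - int m * (N - 1) = 1 - N" by (simp add: algebra_simps)
    ultimately have "N * (\<Sum>k=1..m. x k div N) > N * (-2)" using sx by linarith
    then have "(\<Sum>k=1..m. x k div N) > -2" by (subst (asm) mult_less_cancel_left_pos[OF Npos])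
    then show ?thesis unfolding r_def by (simp add: sum_negf)
  qed
  have "1 \<le> (\<Sum>k=1..m. \<beta> k)" using fS lt by linarith
  then have sum_beta: "1 \<le> (\<Sum>k=1..m. int (\<beta> k))"
    by (simp only: of_nat_sum[symmetric])
  obtain \<delta> where \<delta>: "\<forall>k\<in>{1..m}. r k \<le> \<delta> k \<and> \<delta> k \<le> int (\<beta> k)" "(\<Sum>k=1..m. \<delta> k) = 1"
    using exists_between_sum[of "{1..m}" r "\<lambda>k. int (\<beta> k)" 1] r_le sum_r sum_beta by blast
  obtain i where i: "i \<in> {1..m}" "\<delta> i \<ge> 1"
  proof (rule ccontr)
    assume "\<not> thesis"
    then have "\<forall>k\<in>{1..m}. \<delta> k \<le> 0" using that by force
    then have "(\<Sum>k=1..m. \<delta> k) \<le> 0" by (intro sum_nonpos) auto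
    with \<delta>(2) show False by simp
  qed
  have Nd: "N * \<delta> k \<ge> int (b k) - int (\<alpha> k)" if k: "k \<in> {1..m}" for k
  proof -
    have "N * \<delta> k \<ge> N * r k" using \<delta>(1) k Npos by simp
    moreover have "N * (x k div N) \<le> x k"
    proof -
      have "x k = N * (x k div N) + x k mod N" by simp
      moreover have "x k mod N \<ge> 0" using Npos by simp
      ultimately show ?thesis by linarith
    qed
    ultimately show ?thesis unfolding r_def x_def by simp
  qed
  define \<alpha>1 where "\<alpha>1 k = nat (int (\<alpha> k) + N * \<delta> k - (if k = i then N else 0))" for k
  define \<beta>1 where "\<beta>1 k = nat (int (\<beta> k) - \<delta> k + (if k = i then 1 else 0))" for k
  have a1: "int (\<alpha>1 k) = int (\<alpha> k) + N * \<delta> k - (if k = i then N else 0)" if k: "k \<in> {1..m}" for k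
  proof -
    have "N * \<delta> i \<ge> N" using i Npos by simp
    then show ?thesis using Nd[OF k] unfolding \<alpha>1_def by auto
  qed
  have b1: "int (\<beta>1 k) = int (\<beta> k) - \<delta> k + (if k = i then 1 else 0)" if k: "k \<in> {1..m}" for k
    using \<delta>(1) k unfolding \<beta>1_def by auto
  have fib1: "fib m b \<alpha> \<beta> \<gamma> \<alpha>1 \<beta>1 \<gamma>"
    unfolding fib_def
  proof (intro conjI ballI)
    fix k assume k: "k \<in> {1..m}"
    have e1: "int (\<alpha>1 k) + N * int (\<beta>1 k) = int (\<alpha> k) + N * int (\<beta> k)"
    proof -
      have "N * int (\<beta>1 k) = N * (int (\<beta> k) - \<delta> k + (if k = i then 1 else 0))" using b1[OF k] by simp
      then have "N * int (\<beta>1 k) = N * int (\<beta> k) - N * \<delta> k + (if k = i then N else 0)" by (simp add: algebra_simps)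
      then show ?thesis using a1[OF k] by linarith
    qed
    have "int (\<alpha> k + ?n * \<beta> k + \<gamma> * b k) = int (\<alpha>1 k + ?n * \<beta>1 k + \<gamma> * b k)"
      using e1 unfolding N_def by simp
    then show "\<alpha> k + ?n * \<beta> k + \<gamma> * b k = \<alpha>1 k + ?n * \<beta>1 k + \<gamma> * b k" by (simp only: of_nat_eq_iff)
  next
    have "int (\<Sum>k=1..m. \<beta>1 k) = (\<Sum>k=1..m. int (\<beta> k) - \<delta> k + (if k = i then 1 else 0))"
      unfolding of_nat_sum by (rule sum.cong) (use b1 in auto)
    also have "\<dots> = int (\<Sum>k=1..m. \<beta> k)"
      using i \<delta>(2) by (simp add: sum.distrib sum_subtractf of_nat_sum)
    finally show "(\<Sum>k=1..m. \<beta> k) + \<gamma> = (\<Sum>k=1..m. \<beta>1 k) + \<gamma>" by (simp only: of_nat_eq_iff)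
  qed
  have R1: "Rel K m b (st m \<alpha> \<beta> \<gamma>) (st m \<alpha>1 \<beta>1 \<gamma>)"
    by (rule sameLevel[OF fib1])
  have bi1: "\<beta>1 i \<ge> 1"
  proof -
    have "\<delta> i \<le> int (\<beta> i)" using \<delta>(1) i(1) by blast
    then have "int (\<beta>1 i) \<ge> 1" using b1[OF i(1)] by simp
    then show ?thesis by linarith
  qed
  have ak1: "\<alpha>1 k \<ge> b k" if "k \<in> {1..m}" "k \<noteq> i" for k
    using a1[OF that(1)] Nd[OF that(1)] that(2) by auto
  define \<alpha>2 where "\<alpha>2 k = (if k = i then \<alpha>1 i + (?n - b i) else \<alpha>1 k - b k)" for k
  define \<beta>2 where "\<beta>2 = \<beta>1(i := \<beta>1 i - 1)"
  have R2: "Rel K m b (st m \<alpha>1 \<beta>1 \<gamma>) (st m \<alpha>2 \<beta>2 (\<gamma> + 1))"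
    unfolding \<alpha>2_def \<beta>2_def by (rule move_XW[where \<alpha>=\<alpha>1 and \<beta>=\<beta>1 and b=b and i=i, OF i(1) bi1 ak1])
  have bn: "b i \<le> ?n" using b_le_bsum[OF i(1)] .
  have a2: "int (\<alpha>2 k) = int (\<alpha> k) + N * \<delta> k - int (b k)" if k: "k \<in> {1..m}" for k
    using a1[OF k] ak1[OF k] bn unfolding \<alpha>2_def N_def by (auto simp: of_nat_diff)
  have b2: "int (\<beta>2 k) = int (\<beta> k) - \<delta> k" if k: "k \<in> {1..m}" for k
    using b1[OF k] bi1 unfolding \<beta>2_def by (auto simp: of_nat_diff)
  have fib2: "fib m b \<alpha> \<beta> \<gamma> \<alpha>2 \<beta>2 (\<gamma> + 1)"
    unfolding fib_def
  proof (intro conjI ballI)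
    fix k assume k: "k \<in> {1..m}"
    have e2: "int (\<alpha>2 k) + N * int (\<beta>2 k) + int (b k) = int (\<alpha> k) + N * int (\<beta> k)"
    proof -
      have "N * int (\<beta>2 k) = N * (int (\<beta> k) - \<delta> k)" using b2[OF k] by simp
      then have "N * int (\<beta>2 k) = N * int (\<beta> k) - N * \<delta> k" by (simp add: algebra_simps)
      then show ?thesis using a2[OF k] by linarith
    qed
    have "int (\<alpha> k + ?n * \<beta> k + \<gamma> * b k) = int (\<alpha>2 k + ?n * \<beta>2 k + (\<gamma> + 1) * b k)"
      using e2 unfolding N_def by (simp add: algebra_simps)
    then show "\<alpha> k + ?n * \<beta> k + \<gamma> * b k = \<alpha>2 k + ?n * \<beta>2 k + (\<gamma> + 1) * b k" by (simp only: of_nat_eq_iff)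
  next
    have "int (\<Sum>k=1..m. \<beta>2 k) = (\<Sum>k=1..m. int (\<beta> k) - \<delta> k)"
      unfolding of_nat_sum by (rule sum.cong) (use b2 in auto)
    also have "\<dots> = int (\<Sum>k=1..m. \<beta> k) - 1"
      using \<delta>(2) by (simp add: sum_subtractf of_nat_sum)
    finally show "(\<Sum>k=1..m. \<beta> k) + \<gamma> = (\<Sum>k=1..m. \<beta>2 k) + (\<gamma> + 1)" by linarith
  qed
  show ?thesis using fib2 Rel_trans[OF R1 R2] by blast
qed

lemma comb_up:
  fixes K :: "'k::comm_ring_1 itself"
  assumes "bsum m b > 0" "m \<ge> 1"
  shows "\<gamma> \<le> \<gamma>' \<Longrightarrow> fib m b \<alpha> \<beta> \<gamma> \<alpha>' \<beta>' \<gamma>' \<Longrightarrow> (m - 1) * (bsum m b - 1) \<le> (\<Sum>i=1..m. \<alpha> i)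
    \<Longrightarrow> Rel K m b (st m \<alpha> \<beta> \<gamma>) (st m \<alpha>' \<beta>' \<gamma>')"
proof (induction "\<gamma>' - \<gamma>" arbitrary: \<alpha> \<beta> \<gamma> rule: less_induct)
  case less
  show ?case
  proof (cases "\<gamma> = \<gamma>'")
    case True
    then show ?thesis using sameLevel less.prems by blast
  next
    case False
    then have lt: "\<gamma> < \<gamma>'" using less.prems by simp
    obtain \<alpha>2 \<beta>2 where f2: "fib m b \<alpha> \<beta> \<gamma> \<alpha>2 \<beta>2 (\<gamma> + 1)" and R: "Rel K m b (st m \<alpha> \<beta> \<gamma>) (st m \<alpha>2 \<beta>2 (\<gamma> + 1))"
      using levelUp[OF less.prems(2) lt assms less.prems(3)] by blast
    have f3: "fib m b \<alpha>2 \<beta>2 (\<gamma> + 1) \<alpha>' \<beta>' \<gamma>'"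
      using fib_trans[OF fib_sym[OF f2] less.prems(2)] .
    have "(\<Sum>i=1..m. \<alpha>2 i) = (\<Sum>i=1..m. \<alpha> i)" using fib_sum_alpha[OF f2] by simp
    then have "Rel K m b (st m \<alpha>2 \<beta>2 (\<gamma> + 1)) (st m \<alpha>' \<beta>' \<gamma>')"
      using less.hyps[of "\<gamma> + 1" \<alpha>2 \<beta>2] f3 lt less.prems(3) by simp
    then show ?thesis using R Rel_trans by blast
  qed
qed

lemma comb:
  fixes K :: "'k::comm_ring_1 itself"
  assumes "bsum m b > 0" "m \<ge> 1" "fib m b \<alpha> \<beta> \<gamma> \<alpha>' \<beta>' \<gamma>'" "(m - 1) * (bsum m b - 1) \<le> (\<Sum>i=1..m. \<alpha> i)"
  shows "Rel K m b (st m \<alpha> \<beta> \<gamma>) (st m \<alpha>' \<beta>' \<gamma>')"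
proof (cases "\<gamma> \<le> \<gamma>'")
  case True
  then show ?thesis using comb_up[OF assms(1,2)] assms(3,4) by blast
next
  case False
  have "(\<Sum>i=1..m. \<alpha>' i) = (\<Sum>i=1..m. \<alpha> i)" using fib_sum_alpha[OF assms(3)] by simp
  then have "Rel K m b (st m \<alpha>' \<beta>' \<gamma>') (st m \<alpha> \<beta> \<gamma>)"
    using comb_up[OF assms(1,2), of \<gamma>' \<gamma> \<alpha>' \<beta>' \<alpha> \<beta>] False fib_sym[OF assms(3)] assms(4) by simp
  then show ?thesis by (rule Rel_sym)
qed

lemma comb_mon:
  fixes K :: "'k::comm_ring_1 itself"
  assumes "bsum m b > 0" "m \<ge> 1" "monS m u" "monS m v" "gimg (rexp m b) u = gimg (rexp m b) v"
    and "(m - 1) * (bsum m b - 1) \<le> (\<Sum>i=1..m. lk u (T i))"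
  shows "Rel K m b u v"
proof -
  have f: "fib m b (\<lambda>i. lk u (T i)) (\<lambda>i. lk u (X i)) (lk u W) (\<lambda>i. lk v (T i)) (\<lambda>i. lk v (X i)) (lk v W)"
    unfolding fib_def
  proof (intro conjI ballI)
    fix i assume i: "i \<in> {1..m}"
    show "lk u (T i) + bsum m b * lk u (X i) + lk u W * b i = lk v (T i) + bsum m b * lk v (X i) + lk v W * b i"
      using img_T[OF assms(3) i, of b] img_T[OF assms(4) i, of b] assms(5) by simp
  next
    show "(\<Sum>i=1..m. lk u (X i)) + lk u W = (\<Sum>i=1..m. lk v (X i)) + lk v W"
      using img_Z[OF assms(3), of b] img_Z[OF assms(4), of b] assms(5) by simp
  qed
  have "Rel K m b (st m (\<lambda>i. lk u (T i)) (\<lambda>i. lk u (X i)) (lk u W)) (st m (\<lambda>i. lk v (T i)) (\<lambda>i. lk v (X i)) (lk v W))"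
    by (rule comb[OF assms(1,2) f]) (use assms(6) in simp)
  then show ?thesis using st_of[OF assms(3)] st_of[OF assms(4)] by simp
qed

lemma T_prod_pow: "(T_prod m :: 'k::comm_ring_1 mpoly) ^ k = Poly_Mapping.single (st m (\<lambda>_. k) (\<lambda>_. 0) 0) 1"
proof -
  have "(T_prod m :: 'k mpoly) = Poly_Mapping.single (\<Sum>i=1..m. Poly_Mapping.single (T i) 1) 1"
    unfolding T_prod_def Var_single by (rule prod_single)
  then have "(T_prod m :: 'k mpoly) ^ k = Poly_Mapping.single (\<Sum>j<k. \<Sum>i=1..m. Poly_Mapping.single (T i) 1) 1"
    by (simp add: single_pow)
  also have "(\<Sum>j<k. \<Sum>i=1..m. Poly_Mapping.single (T i) 1) = st m (\<lambda>_. k) (\<lambda>_. 0) 0"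
  proof (rule poly_mapping_eqI)
    fix w
    show "lk (\<Sum>j<k. \<Sum>i=1..m. Poly_Mapping.single (T i) 1) w = lk (st m (\<lambda>_. k) (\<lambda>_. 0) 0) w"
      by (cases w) (auto simp: lookup_sum lookup_single when_def lk_st_T lk_st_X lk_st_W lk_st_Z)
  qed
  finally show ?thesis .
qed

lemma single_mult_cancel:
  fixes q :: "'k::comm_ring_1 mpoly"
  assumes "Poly_Mapping.single a (1::'k::comm_ring_1) * q = 0"
  shows "q = 0"
proof (rule poly_mapping_eqI)
  fix y
  have "Poly_Mapping.single a (1::'k) * q = (\<Sum>k\<in>Poly_Mapping.keys q. Poly_Mapping.single (a + k) (lk q k))"
  proof -
    have e: "(\<Sum>k\<in>Poly_Mapping.keys q. Poly_Mapping.single k (lk q k)) = q" by (rule mpoly_expand[symmetric])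
    have "Poly_Mapping.single a (1::'k) * (\<Sum>k\<in>Poly_Mapping.keys q. Poly_Mapping.single k (lk q k))
        = (\<Sum>k\<in>Poly_Mapping.keys q. Poly_Mapping.single (a + k) (lk q k))"
      by (simp add: sum_distrib_left mult_single)
    then show ?thesis by (simp only: e)
  qed
  moreover have canc: "\<And>x. (a + x = a + y) = (x = y)"
    by simp
  ultimately have "lk (Poly_Mapping.single a (1::'k) * q) (a + y) = (\<Sum>k\<in>Poly_Mapping.keys q. if k = y then lk q k else 0)"
    by (simp add: lookup_sum lookup_single when_def canc)
  also have "\<dots> = lk q y" by (simp add: sum.delta' in_keys_iff)
  finally show "lk q y = lk 0 y" using assms by simp
qed

lemma J_lin_zero:
  fixes x :: "'k::comm_ring_1 mpoly"
  assumes "x \<in> S_ideal m (rees_ideal_1 m b)"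
  shows "lin (rexp m b) x = 0"
proof -
  obtain n s g where x: "x = (\<Sum>i<(n::nat). s i * g i)" "\<forall>i<n. in_S m (s i) \<and> g i \<in> rees_ideal_1 m b"
    using assms unfolding S_ideal_def by force
  have "lin (rexp m b) (g i) = 0" if "i < n" for i
    using x(2) that unfolding rees_ideal_1_def rees_ideal_def by (simp add: subst_rees)
  then show ?thesis unfolding x by (simp add: lin_sum lin_mult)
qed

lemma colon_sub:
  fixes h :: "'k::comm_ring_1 mpoly"
  assumes "h \<in> S_colon m (S_ideal m (rees_ideal_1 m b)) (T_prod m ^ k)"
  shows "h \<in> rees_ideal m b"
proof -
  have hS: "in_S m h" and hJ: "T_prod m ^ k * h \<in> S_ideal m (rees_ideal_1 m b)"
    using assms unfolding S_colon_def by auto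
  have "lin (rexp m b) (T_prod m ^ k * h) = 0" by (rule J_lin_zero[OF hJ])
  then have "Poly_Mapping.single (gimg (rexp m b) (st m (\<lambda>_. k) (\<lambda>_. 0) 0)) (1::'k) * lin (rexp m b) h = 0"
    by (simp add: lin_mult T_prod_pow lin_single)
  then have "lin (rexp m b) h = 0" by (rule single_mult_cancel)
  then show ?thesis using hS unfolding rees_ideal_def by (simp add: subst_rees)
qed

lemma monS_add: "monS m u \<Longrightarrow> monS m v \<Longrightarrow> monS m (u + v)"
  unfolding monS_def by (meson keys_add le_sup_iff order_trans)

lemma key_lemma:
  fixes K :: "'k::comm_ring_1 itself"
  assumes npos: "bsum m b > 0" and m1: "m \<ge> 1" and big: "(m - 1) * (bsum m b - 1) \<le> m * k"
  shows "in_S m p \<Longrightarrow> lin (rexp m b) p = 0 \<Longrightarrow>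
    Poly_Mapping.single (st m (\<lambda>_. k) (\<lambda>_. 0) 0) (1::'k) * p \<in> S_ideal m (rees_ideal_1 m b)"
proof (induction "card (Poly_Mapping.keys p)" arbitrary: p rule: less_induct)
  case less
  let ?E = "st m (\<lambda>_. k) (\<lambda>_. 0) 0"
  let ?g = "gimg (rexp m b)"
  show ?case
  proof (cases "p = 0")
    case True
    then show ?thesis by (simp add: S_ideal_zero)
  next
    case False
    then obtain mon0 where m0: "mon0 \<in> Poly_Mapping.keys p"
      by (metis all_not_in_conv keys_eq_empty)
    define c where "c = lk p mon0"
    have c0: "c \<noteq> 0" using m0 unfolding c_def by (simp add: in_keys_iff)
    have "\<exists>mon1\<in>Poly_Mapping.keys p. mon1 \<noteq> mon0 \<and> ?g mon1 = ?g mon0"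
    proof (rule ccontr)
      assume na: "\<not> ?thesis"
      have "lk (lin (rexp m b) p) (?g mon0) = (\<Sum>mon\<in>Poly_Mapping.keys p. if mon = mon0 then lk p mon else 0)"
        unfolding lin_def lookup_sum
        by (rule sum.cong) (use na in \<open>auto simp: lookup_single when_def\<close>)
      also have "\<dots> = c" using m0 unfolding c_def by simp
      finally show False using less.prems(2) c0 by simp
    qed
    then obtain mon1 where m1k: "mon1 \<in> Poly_Mapping.keys p" and m10: "mon1 \<noteq> mon0" and gm: "?g mon1 = ?g mon0"
      by blast
    define p' where "p' = p - Poly_Mapping.single mon0 c + Poly_Mapping.single mon1 c"
    have keys': "Poly_Mapping.keys p' \<subseteq> Poly_Mapping.keys p - {mon0}"
    proof
      fix mon assume "mon \<in> Poly_Mapping.keys p'"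
      then have "lk p' mon \<noteq> 0" by (simp add: in_keys_iff)
      moreover have "lk p' mon = lk p mon - (if mon = mon0 then c else 0) + (if mon = mon1 then c else 0)"
        unfolding p'_def by (simp add: lookup_add lookup_minus lookup_single when_def eq_commute)
      ultimately show "mon \<in> Poly_Mapping.keys p - {mon0}"
        using m10 m1k unfolding c_def by (cases "mon = mon0"; cases "mon = mon1") (simp_all add: in_keys_iff)
    qed
    have card': "card (Poly_Mapping.keys p') < card (Poly_Mapping.keys p)"
    proof -
      have "card (Poly_Mapping.keys p') \<le> card (Poly_Mapping.keys p - {mon0})"
        using keys' by (intro card_mono) auto
      also have "\<dots> < card (Poly_Mapping.keys p)" using m0 by (intro card_Diff1_less) auto
      finally show ?thesis .
    qed
    have inS': "in_S m p'" using less.prems(1) keys' unfolding in_S_def by blast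
    have lin': "lin (rexp m b) p' = 0"
      unfolding p'_def using less.prems(2) gm by (simp add: lin_add lin_diff lin_single)
    have IH: "Poly_Mapping.single ?E (1::'k) * p' \<in> S_ideal m (rees_ideal_1 m b)"
      using less.hyps[OF card' inS' lin'] .
    have mon0S: "monS m mon0" and mon1S: "monS m mon1"
      using less.prems(1) m0 m1k unfolding in_S_def monS_def by auto
    have R: "Rel K m b (mon0 + ?E) (mon1 + ?E)"
    proof (rule comb_mon[OF npos m1])
      show "monS m (mon0 + ?E)" "monS m (mon1 + ?E)" using mon0S mon1S monS_st by (blast intro: monS_add)+
      show "?g (mon0 + ?E) = ?g (mon1 + ?E)" by (simp add: gimg_add gm)
      have "(\<Sum>i=1..m. lk (mon0 + ?E) (T i)) = (\<Sum>i=1..m. lk mon0 (T i)) + m * k"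
        by (simp add: lookup_add lk_st_T sum.distrib)
      then show "(m - 1) * (bsum m b - 1) \<le> (\<Sum>i=1..m. lk (mon0 + ?E) (T i))" using big by simp
    qed
    have eq: "Poly_Mapping.single ?E (1::'k) * p = Poly_Mapping.single ?E 1 * p'
       + Const c * (Poly_Mapping.single (mon0 + ?E) 1 - Poly_Mapping.single (mon1 + ?E) 1)"
    proof -
      have a: "Poly_Mapping.single ?E (1::'k) * p' = Poly_Mapping.single ?E 1 * p
          - Poly_Mapping.single (mon0 + ?E) c + Poly_Mapping.single (mon1 + ?E) c"
        unfolding p'_def by (simp add: distrib_left right_diff_distrib mult_single add.commute)
      have b: "Const c * (Poly_Mapping.single (mon0 + ?E) 1 - Poly_Mapping.single (mon1 + ?E) (1::'k))
          = Poly_Mapping.single (mon0 + ?E) c - Poly_Mapping.single (mon1 + ?E) c"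
        by (simp add: Const_def right_diff_distrib mult_single)
      show ?thesis unfolding a b by simp
    qed
    have R': "Poly_Mapping.single (mon0 + ?E) (1::'k) - Poly_Mapping.single (mon1 + ?E) 1 \<in> S_ideal m (rees_ideal_1 m b)"
      using R unfolding Rel_def .
    have "Const c * (Poly_Mapping.single (mon0 + ?E) (1::'k) - Poly_Mapping.single (mon1 + ?E) 1) \<in> S_ideal m (rees_ideal_1 m b)"
      by (rule S_ideal_mult[OF R' in_S_Const])
    from S_ideal_add[OF IH this] show ?thesis by (simp only: eq)
  qed
qed

lemma colon_eq:
  assumes npos: "bsum m b > 0" and m1: "m \<ge> 1" and big: "(m - 1) * (bsum m b - 1) \<le> m * k"
  shows "S_colon m (S_ideal m (rees_ideal_1 m b)) ((T_prod m :: 'k::comm_ring_1 mpoly) ^ k) = rees_ideal m b"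
proof
  show "S_colon m (S_ideal m (rees_ideal_1 m b)) ((T_prod m :: 'k mpoly) ^ k) \<subseteq> rees_ideal m b"
    by (rule subsetI) (rule colon_sub)
next
  show "rees_ideal m b \<subseteq> S_colon m (S_ideal m (rees_ideal_1 m b)) ((T_prod m :: 'k mpoly) ^ k)"
  proof
    fix p :: "'k mpoly" assume p: "p \<in> rees_ideal m b"
    then have pS: "in_S m p" and pl: "lin (rexp m b) p = 0"
      unfolding rees_ideal_def by (auto simp: subst_rees)
    have "Poly_Mapping.single (st m (\<lambda>_. k) (\<lambda>_. 0) 0) (1::'k) * p \<in> S_ideal m (rees_ideal_1 m b)"
      by (rule key_lemma[OF npos m1 big pS pl])
    then show "p \<in> S_colon m (S_ideal m (rees_ideal_1 m b)) ((T_prod m :: 'k mpoly) ^ k)"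
      unfolding S_colon_def using pS by (simp add: T_prod_pow)
  qed
qed

theorem corollary4p2:
  fixes m :: nat and b :: "nat \<Rightarrow> nat" and l :: int
  assumes "m \<ge> 3"
    and "card {i \<in> {1..m}. b i \<noteq> 0} \<ge> 2"
    and "real_of_int l \<ge> (real (m - 1) * (real (bsum m b) - 1)) / real m"
  shows "S_colon m (S_ideal m (rees_ideal_1 m b)) ((T_prod m :: 'k::field mpoly) ^ nat l)
           = rees_ideal m b
       \<and> S_colon m (S_ideal m (rees_ideal_1 m b)) ((T_prod m :: 'k::field mpoly) ^ bsum m b)
           = rees_ideal m b"
proof -
  let ?n = "bsum m b"
  have m1: "m \<ge> 1" using assms(1) by simp
  have "{i \<in> {1..m}. b i \<noteq> 0} \<noteq> {}" using assms(2) by (metis card.empty not_numeral_le_zero)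
  then obtain i where i: "i \<in> {1..m}" "b i \<noteq> 0" by blast
  have npos: "?n > 0" using b_le_bsum[OF i(1), of b] i(2) by simp
  have mpos: "real m > 0" using m1 by simp
  have h: "real (m - 1) * (real ?n - 1) \<le> real m * real_of_int l"
    using assms(3) mpos by (simp add: pos_divide_le_eq mult.commute)
  have e: "real (?n - 1) = real ?n - 1" using npos by (simp add: of_nat_diff)
  have le: "real ((m - 1) * (?n - 1)) \<le> real m * real_of_int l"
    using h by (simp only: of_nat_mult e)
  then have "0 \<le> real m * real_of_int l" by (meson of_nat_0_le_iff order_trans)
  then have l0: "l \<ge> 0" using mpos by (simp add: zero_le_mult_iff)
  have "real (m * nat l) = real m * real_of_int l" using l0 by simp
  with le have big1: "(m - 1) * (?n - 1) \<le> m * nat l" by (metis of_nat_le_iff)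
  have big2: "(m - 1) * (?n - 1) \<le> m * ?n" by (intro mult_le_mono) auto
  show ?thesis using colon_eq[OF npos m1 big1] colon_eq[OF npos m1 big2] by blast
qed

end
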